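(* Let $w$ be an integer with $w-1\equiv 1$ or $3\pmod 6$, and for $i\ge0$ let $\dot{\mathcal{D}}_i$ denote the set of $i$-dimensional subspaces of $\mathrm{GF}(2)^{w-1}$ each of which is orthogonal (over $\mathrm{GF}(2)$) to the characteristic vectors of all blocks of at least one STS$(w-1)$ on $\{1,\ldots,w-1\}$. Let $i,j$ be nonnegative integers with $i\le j$. If $\dot{\mathcal{D}}_j$ is nonempty, then every subspace from $\dot{\mathcal{D}}_i$ is contained in exactly $\dot\Gamma_{w,i,j}$ subspaces from $\dot{\mathcal{D}}_j$, where $$\dot\Gamma_{w,i,j}=\left(\left(\tfrac{w}{2^i}\right)!\right)^{2^i}\Bigg/\left(2^{\frac{(j-i)(j+i+1)}2}\left(\left(\tfrac{w}{2^j}\right)!\right)^{2^j}[j-i]_2!\right).$$ In particular, $|\dot{\mathcal{D}}_j|=\dot\Gamma_{w,0,j}$.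
   Context: A Steiner triple system STS$(n)$ on $\{1,\ldots,n\}$ is a collection of 3-subsets (blocks) such that every 2-subset is contained in exactly one block. Blocks are identified with their characteristic vectors in $\mathrm{GF}(2)^{n}$; $x\perp y$ means $\sum_t x_ty_t=0$. The $q$-factorial is $[n]_q!=\prod_{s=1}^n\sum_{r=0}^{s-1}q^r$, with $[0]_q!=1$. *)

theory Defs
  imports "HOL-Analysis.Analysis" "HOL-Library.Z2"
begin

text \<open>The ground set {1,...,w-1} is modelled by a finite type 'n with CARD('n) = w - 1;
GF(2)^(w-1) is the vector type bit^'n, a vector space over the field bit = GF(2).\<close>

definition is_STS :: "'n set set \<Rightarrow> bool" where
  "is_STS S \<longleftrightarrow> (\<forall>B\<in>S. card B = 3) \<and>
     (\<forall>x y. x \<noteq> y \<longrightarrow> (\<exists>!B. B \<in> S \<and> {x, y} \<subseteq> B))"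

definition charvec :: "'n::finite set \<Rightarrow> bit ^ 'n" where
  "charvec B = (\<chi> t. if t \<in> B then 1 else 0)"

definition orth :: "bit ^ 'n::finite \<Rightarrow> bit ^ 'n \<Rightarrow> bool" where
  "orth x y \<longleftrightarrow> (\<Sum>t\<in>UNIV. x $ t * y $ t) = 0"

definition Ddot :: "nat \<Rightarrow> (bit ^ 'n::finite) set set" where
  "Ddot i = {V. vec.subspace V \<and> vec.dim V = i \<and>
     (\<exists>S::'n set set. is_STS S \<and> (\<forall>v\<in>V. \<forall>B\<in>S. orth v (charvec B)))}"

definition qfact :: "real \<Rightarrow> nat \<Rightarrow> real" where
  "qfact q n = (\<Prod>s=1..n. \<Sum>r<s. q ^ r)"

definition Gamma_dot :: "nat \<Rightarrow> nat \<Rightarrow> nat \<Rightarrow> real" where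
  "Gamma_dot w i j =
     (real (fact (w div 2 ^ i)) ^ (2 ^ i)) /
     (2 powr (real ((j - i) * (j + i + 1)) / 2) * real (fact (w div 2 ^ j)) ^ (2 ^ j)
        * qfact 2 (j - i))"

end

theory Submission
  imports Defs
begin

declare add_bit_eq_xor[simp del] mult_bit_eq_and[simp del]

lemma bit_add_self[simp]: "(x::bit) + x = 0" by (cases x) simp_all
lemma bit_uminus[simp]: "(-x::bit) = x" by (cases x) simp_all
lemma bit_of_nat: "(of_nat n :: bit) = (if even n then 0 else 1)"
  by (induction n) auto
lemma bit_sum_zero: "(x::bit) + y = 0 \<longleftrightarrow> x = y" by (cases x; cases y) simp_all
lemma bit_cases2: "(x::bit) = 0 \<or> x = 1" by (cases x) simp_all
lemma vec_add_self[simp]: "(x::bit^'n) + x = 0"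
  by (simp add: vec_eq_iff)
lemma vec_uminus[simp]: "-(x::bit^'n) = x"
  by (simp add: vec_eq_iff)
lemma vec_minus_eq_plus: "(x::bit^'n) - y = x + y"
  by (simp add: vec_eq_iff)

lemma vec_sum_zero: "(x::bit^'n) + y = 0 \<longleftrightarrow> x = y"
  by (simp add: vec_eq_iff bit_sum_zero)

definition lc :: "bit list \<Rightarrow> (bit^'n) list \<Rightarrow> bit^'n" where
  "lc c l = (\<Sum>k<length l. (c!k) *s (l!k))"

definition Ls :: "nat \<Rightarrow> bit list set" where "Ls s = {c. length c = s}"

definition lspan :: "(bit^'n) list \<Rightarrow> (bit^'n) set" where
  "lspan l = (\<lambda>c. lc c l) ` Ls (length l)"

definition lindep :: "(bit^'n) list \<Rightarrow> bool" where
  "lindep l \<longleftrightarrow> (\<forall>c. length c = length l \<longrightarrow> lc c l = 0 \<longrightarrow> c = replicate (length l) 0)"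

lemma card_Ls: "card (Ls s) = 2 ^ s"
proof -
  have u: "(UNIV::bit set) = {0,1}" using bit_cases2 by auto
  have "card {xs. set xs \<subseteq> (UNIV::bit set) \<and> length xs = s} = card (UNIV::bit set)^s"
    by (rule card_lists_length_eq) (simp add: u)
  also have "card (UNIV::bit set) = 2" by (subst u) simp
  finally show ?thesis by (simp add: Ls_def)
qed

lemma finite_Ls[simp]: "finite (Ls s)"
  using card_Ls[of s] by (metis card.infinite power_not_zero zero_neq_numeral)

lemma lc_append: "length c = length l \<Longrightarrow> lc (c@[x]) (l@[b]) = lc c l + x *s b"
  by (simp add: lc_def nth_append)

lemma lc_zero: "lc (replicate (length l) 0) l = 0"
  by (simp add: lc_def)

lemma lc_add: "length c = length l \<Longrightarrow> length d = length l \<Longrightarrow>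
   lc c l + lc d l = lc (map2 (+) c d) l"
  by (simp add: lc_def sum.distrib[symmetric] vector_sadd_rdistrib)

lemma lc_smult: "length c = length l \<Longrightarrow> r *s lc c l = lc (map ((*) r) c) l"
  by (simp add: lc_def vec.scale_sum_right)

lemma lspan_subspace: "vec.subspace (lspan l)"
  unfolding vec.subspace_def lspan_def
proof (intro conjI ballI allI)
  show "0 \<in> (\<lambda>c. lc c l) ` Ls (length l)"
    by (rule image_eqI[of _ _ "replicate (length l) 0"]) (auto simp: lc_zero Ls_def)
next
  fix x y assume "x \<in> (\<lambda>c. lc c l) ` Ls (length l)" "y \<in> (\<lambda>c. lc c l) ` Ls (length l)"
  then obtain c d where "x = lc c l" "y = lc d l" "length c = length l" "length d = length l"
    by (auto simp: Ls_def)
  then show "x + y \<in> (\<lambda>c. lc c l) ` Ls (length l)"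
    by (intro image_eqI[of _ _ "map2 (+) c d"]) (auto simp: lc_add Ls_def)
next
  fix r x assume "x \<in> (\<lambda>c. lc c l) ` Ls (length l)"
  then obtain c where "x = lc c l" "length c = length l" by (auto simp: Ls_def)
  then show "r *s x \<in> (\<lambda>c. lc c l) ` Ls (length l)"
    by (intro image_eqI[of _ _ "map ((*) r) c"]) (auto simp: lc_smult Ls_def)
qed

lemma lc_unit: "k < length l \<Longrightarrow> lc ((replicate (length l) 0)[k:=1]) l = l!k"
proof -
  assume k: "k < length l"
  have "lc ((replicate (length l) 0)[k:=1]) l = (\<Sum>k'<length l. (if k' = k then l!k else 0))"
    unfolding lc_def by (intro sum.cong) (auto simp: nth_list_update)
  also have "\<dots> = l!k" using k by simp
  finally show ?thesis .
qed

lemma set_lspan: "set l \<subseteq> lspan l"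
proof
  fix x assume "x \<in> set l"
  then obtain k where k: "k < length l" "x = l!k" by (auto simp: in_set_conv_nth)
  then show "x \<in> lspan l" unfolding lspan_def
    by (intro image_eqI[of _ _ "(replicate (length l) 0)[k:=1]"]) (auto simp: lc_unit Ls_def)
qed

lemma lspan_sub: "vec.subspace V \<Longrightarrow> set l \<subseteq> V \<Longrightarrow> lspan l \<subseteq> V"
  unfolding lspan_def lc_def
  by (auto intro!: vec.subspace_sum vec.subspace_scale)

lemma lc_inj: "lindep l \<Longrightarrow> inj_on (\<lambda>c. lc c l) (Ls (length l))"
proof (rule inj_onI)
  fix c d assume l: "lindep l" and c: "c \<in> Ls (length l)" and d: "d \<in> Ls (length l)"
    and e: "lc c l = lc d l"
  have "lc (map2 (+) c d) l = 0" using c d e by (simp add: lc_add[symmetric] Ls_def)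
  then have z: "map2 (+) c d = replicate (length l) 0" using l c d by (simp add: lindep_def Ls_def)
  have "c!k = d!k" if k: "k < length l" for k
  proof -
    have "(map2 (+) c d)!k = c!k + d!k" using k c d by (simp add: Ls_def)
    then have "c!k + d!k = 0" using z k by simp
    then show ?thesis by (simp add: bit_sum_zero)
  qed
  then show "c = d" using c d unfolding Ls_def by (auto simp: list_eq_iff_nth_eq)
qed

lemma card_lspan: "lindep l \<Longrightarrow> card (lspan l) = 2 ^ length l"
  unfolding lspan_def using lc_inj card_image card_Ls by metis

lemma lindep_append: "lindep (l@[b]) \<longleftrightarrow> lindep l \<and> b \<notin> lspan l"
proof
  assume A: "lindep (l@[b])"
  show "lindep l \<and> b \<notin> lspan l"
  proof
    show "lindep l" unfolding lindep_def
    proof (intro allI impI)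
      fix c assume c: "length c = length l" "lc c l = 0"
      then have "lc (c@[0]) (l@[b]) = 0" by (simp add: lc_append)
      then have "c@[0] = replicate (length l + 1) 0" using A c by (simp add: lindep_def)
      then show "c = replicate (length l) 0" by (simp add: replicate_append_same[symmetric])
    qed
  next
    show "b \<notin> lspan l"
    proof
      assume "b \<in> lspan l"
      then obtain c where c: "length c = length l" "b = lc c l" by (auto simp: lspan_def Ls_def)
      then have "lc (c@[1]) (l@[b]) = 0" by (simp add: lc_append)
      then have "c@[1] = replicate (length l + 1) 0" using A c by (simp add: lindep_def)
      then have "last (c@[1]) = last (replicate (Suc (length l)) (0::bit))" by simp
      moreover have "last (replicate (Suc (length l)) (0::bit)) = 0" by (rule last_replicate) simp
      ultimately show False by simp
    qed
  qed
next
  assume A: "lindep l \<and> b \<notin> lspan l"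
  show "lindep (l@[b])" unfolding lindep_def
  proof (intro allI impI)
    fix c' assume c': "length c' = length (l@[b])" "lc c' (l@[b]) = 0"
    have ne: "c' \<noteq> []" using c' by auto
    define c x where "c = butlast c'" and "x = last c'"
    have cx: "c' = c@[x]" "length c = length l" using ne c' by (simp_all add: c_def x_def)
    then have e: "lc c l + x *s b = 0" using c' by (simp add: lc_append)
    show "c' = replicate (length (l@[b])) 0"
    proof (cases x)
      case zero
      then have "lc c l = 0" using e by simp
      then have "c = replicate (length l) 0" using A cx by (simp add: lindep_def)
      then show ?thesis using cx zero by (simp add: replicate_append_same[symmetric])
    next
      case one
      then have "lc c l + b = 0" using e by simp
      then have "b = lc c l" by (simp add: vec_sum_zero)
      then have "b \<in> lspan l" using cx by (auto simp: lspan_def Ls_def)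
      then show ?thesis using A by simp
    qed
  qed
qed

lemma list_basis:
  assumes V: "vec.subspace (V::(bit^'n) set)"
  obtains l where "lindep l" "lspan l = V" "length l = vec.dim V"
proof -
  obtain B where B: "finite B" "B \<subseteq> V" "vec.independent B" "vec.span B = V" "card B = vec.dim V"
    using vec.basis_subspace_exists[OF V] by blast
  obtain l where l: "set l = B" "distinct l" using finite_distinct_list[OF B(1)] by blast
  have len: "length l = vec.dim V" using l B by (metis distinct_card)
  have sp: "lspan l = V"
  proof
    show "lspan l \<subseteq> V" using lspan_sub[OF V] l B by simp
    show "V \<subseteq> lspan l" using B(4) vec.span_minimal[OF _ lspan_subspace, of B l] set_lspan[of l] l by simp
  qed
  have ind: "lindep l" unfolding lindep_def
  proof (intro allI impI, rule ccontr)
    fix c assume c: "length c = length l" "lc c l = 0" "c \<noteq> replicate (length l) 0"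
    then obtain k where k: "k < length l" "c!k \<noteq> 0"
      by (metis (mono_tags, lifting) list_eq_iff_nth_eq length_replicate nth_replicate)
    then have ck: "c!k = 1" by simp
    define R where "R = (\<Sum>k'\<in>{..<length l}-{k}. (c!k') *s (l!k'))"
    have "lc c l = (c!k) *s (l!k) + R"
      unfolding lc_def R_def using k by (simp add: sum.remove)
    then have "l!k + R = 0" using c ck by simp
    then have lk: "l!k = R" by (simp add: vec_sum_zero)
    have "R \<in> vec.span (B - {l!k})" unfolding R_def
    proof (intro vec.span_sum vec.span_scale vec.span_base)
      fix k' assume "k' \<in> {..<length l} - {k}"
      then show "l!k' \<in> B - {l!k}" using l k by (auto simp: nth_eq_iff_index_eq)
    qed
    then have "vec.dependent B" unfolding vec.dependent_def using lk l k
      by (metis nth_mem)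
    then show False using B(3) by simp
  qed
  show ?thesis using that ind sp len by blast
qed

lemma card_subspace: "vec.subspace (V::(bit^'n) set) \<Longrightarrow> card V = 2 ^ vec.dim V"
  by (metis list_basis card_lspan)

lemma dim_lspan: "lindep l \<Longrightarrow> vec.dim (lspan l) = length l"
proof -
  assume "lindep l"
  then have "card (lspan l) = 2 ^ length l" by (rule card_lspan)
  moreover have "card (lspan l) = 2 ^ vec.dim (lspan l)" by (rule card_subspace[OF lspan_subspace])
  ultimately have "(2::nat) ^ vec.dim (lspan l) = 2 ^ length l" by simp
  then show ?thesis by (simp add: power_inject_exp)
qed

definition xe :: "bit^'n \<Rightarrow> 'n option \<Rightarrow> bit" where
  "xe x p = (case p of None \<Rightarrow> 0 | Some t \<Rightarrow> x $ t)"

definition fe :: "(bit^'n) list \<Rightarrow> 'n option \<Rightarrow> bit list" where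
  "fe l p = map (\<lambda>b. xe b p) l"

definition dot :: "bit list \<Rightarrow> bit list \<Rightarrow> bit" where
  "dot c a = (\<Sum>k<length a. c!k * a!k)"

definition fib :: "(bit^'n::finite) list \<Rightarrow> bit list \<Rightarrow> nat" where
  "fib l a = card {p::'n option. fe l p = a}"

definition goodtuple :: "(bit^'n::finite) list \<Rightarrow> bool" where
  "goodtuple l \<longleftrightarrow> (\<forall>a\<in>Ls (length l). 2 ^ length l * fib l a = CARD('n) + 1)"

definition wt :: "bit^'n::finite \<Rightarrow> nat" where
  "wt x = card {p::'n option. xe x p = 1}"

definition goodV :: "(bit^'n::finite) set \<Rightarrow> bool" where
  "goodV V \<longleftrightarrow> (\<forall>x\<in>V. x \<noteq> 0 \<longrightarrow> 2 * wt x = CARD('n) + 1)"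

lemma fe_Ls[simp]: "fe l p \<in> Ls (length l)" by (simp add: fe_def Ls_def)
lemma length_fe[simp]: "length (fe l p) = length l" by (simp add: fe_def)

lemma xe_lc: "length c = length l \<Longrightarrow> xe (lc c l) p = dot c (fe l p)"
  by (cases p) (simp_all add: xe_def lc_def dot_def fe_def)

lemma dot_comm: "length c = length a \<Longrightarrow> dot c a = dot a c"
  by (simp add: dot_def mult.commute)

lemma dot_add: "length x = length y \<Longrightarrow> dot c (map2 (+) x y) = dot c x + dot c y"
  by (simp add: dot_def distrib_left sum.distrib)

lemma dot_zero: "dot c (replicate s 0) = 0"
  by (simp add: dot_def)

lemma bit_pp: "(x::bit) + 1 + 1 = x" by (cases x) simp_all

lemma dot_balance:
  assumes d: "d \<in> Ls s" "d \<noteq> replicate s 0"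
  shows "2 * card {c\<in>Ls s. dot d c = 1} = 2 ^ s"
proof -
  have ds: "length d = s" using d by (simp add: Ls_def)
  obtain k where k: "k < s" "d!k \<noteq> 0" using d ds
    by (metis list_eq_iff_nth_eq length_replicate nth_replicate)
  then have dk: "d!k = 1" by simp
  define f where "f c = c[k := c!k + 1]" for c :: "bit list"
  have ff: "f (f c) = c" for c
  proof (cases "k < length c")
    case True then show ?thesis unfolding f_def by (simp add: bit_pp)
  next
    case False then show ?thesis unfolding f_def by (simp add: list_update_beyond)
  qed
  have fd: "dot d (f c) = dot d c + 1" if "c \<in> Ls s" for c
  proof -
    have cs: "length c = s" using that by (simp add: Ls_def)
    have "dot d (f c) = (\<Sum>k'<s. d!k' * c!k' + (if k' = k then 1 else 0))"
      unfolding dot_def f_def using cs k dk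
      by (intro sum.cong) (auto simp: nth_list_update distrib_left)
    also have "\<dots> = (\<Sum>k'<s. d!k' * c!k') + (\<Sum>k'<s. (if k' = k then 1 else 0))"
      by (rule sum.distrib)
    also have "(\<Sum>k'<s. (if k' = k then (1::bit) else 0)) = 1" using k by simp
    finally show ?thesis using cs by (simp add: dot_def)
  qed
  have fL: "f c \<in> Ls s" if "c \<in> Ls s" for c using that by (simp add: f_def Ls_def)
  have "bij_betw f {c\<in>Ls s. dot d c = 1} {c\<in>Ls s. dot d c = 0}"
  proof (rule bij_betw_byWitness[where f'=f])
    show "\<forall>a\<in>{c \<in> Ls s. dot d c = 1}. f (f a) = a" using ff by blast
    show "\<forall>a\<in>{c \<in> Ls s. dot d c = 0}. f (f a) = a" using ff by blast
    show "f ` {c \<in> Ls s. dot d c = 1} \<subseteq> {c \<in> Ls s. dot d c = 0}"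
      using fd fL by auto
    show "f ` {c \<in> Ls s. dot d c = 0} \<subseteq> {c \<in> Ls s. dot d c = 1}"
      using fd fL by auto
  qed
  then have e: "card {c\<in>Ls s. dot d c = 1} = card {c\<in>Ls s. dot d c = 0}" by (rule bij_betw_same_card)
  have u: "Ls s = {c\<in>Ls s. dot d c = 1} \<union> {c\<in>Ls s. dot d c = 0}" using bit_cases2 by auto
  have "card (Ls s) = card {c\<in>Ls s. dot d c = 1} + card {c\<in>Ls s. dot d c = 0}"
    by (subst u, rule card_Un_disjoint) auto
  then show ?thesis using e card_Ls by simp
qed

lemma finite_option_sets[simp]: "finite (A :: ('n::finite) option set)" by simp

lemma wt_lc:
  fixes l :: "(bit^'n::finite) list"
  assumes g: "goodtuple l" and c: "c \<in> Ls (length l)" "c \<noteq> replicate (length l) 0"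
  shows "2 * wt (lc c l) = CARD('n) + 1"
proof -
  let ?s = "length l"
  let ?A1 = "{a\<in>Ls ?s. dot c a = 1}"
  have "{p. xe (lc c l) p = 1} = (\<Union>a\<in>?A1. {p. fe l p = a})"
    using c by (auto simp: xe_lc Ls_def)
  then have "wt (lc c l) = (\<Sum>a\<in>?A1. card {p::'n option. fe l p = a})"
    unfolding wt_def by (simp only:) (rule card_UN_disjoint, auto)
  then have "2 ^ ?s * wt (lc c l) = (\<Sum>a\<in>?A1. 2 ^ ?s * fib l a)"
    by (simp add: fib_def sum_distrib_left)
  also have "\<dots> = card ?A1 * (CARD('n) + 1)" using g by (simp add: goodtuple_def)
  finally have "2 * (2 ^ ?s * wt (lc c l)) = 2 * card ?A1 * (CARD('n) + 1)" by simp
  also have "\<dots> = 2 ^ ?s * (CARD('n) + 1)" using dot_balance[OF c] by simp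
  finally have h: "2 ^ ?s * (2 * wt (lc c l)) = 2 ^ ?s * (CARD('n) + 1)" by (simp add: algebra_simps)
  have nz: "(2::nat) ^ ?s \<noteq> 0" by simp
  show ?thesis using mult_left_cancel[OF nz] h by blast
qed

lemma goodtuple_imp:
  assumes g: "goodtuple (l::(bit^'n::finite) list)"
  shows "lindep l" "goodV (lspan l)"
proof -
  show "lindep l" unfolding lindep_def
  proof (intro allI impI, rule ccontr)
    fix c assume c: "length c = length l" "lc c l = 0" "c \<noteq> replicate (length l) 0"
    have "2 * wt (lc c l) = CARD('n) + 1" using wt_lc[OF g, of c] c by (simp add: Ls_def)
    moreover have "wt (0::bit^'n) = 0" by (simp add: wt_def xe_def split: option.splits)
    ultimately show False using c by simp
  qed
  show "goodV (lspan l)" unfolding goodV_def lspan_def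
  proof (intro ballI impI)
    fix x assume "x \<in> (\<lambda>c. lc c l) ` Ls (length l)" "x \<noteq> 0"
    then obtain c where "c \<in> Ls (length l)" "x = lc c l" "c \<noteq> replicate (length l) 0"
      using lc_zero by blast
    then show "2 * wt x = CARD('n) + 1" using wt_lc[OF g] by simp
  qed
qed

definition chi :: "bit \<Rightarrow> real" where "chi b = (if b = 0 then 1 else -1)"

lemma chi_add: "chi (x + y) = chi x * chi y"
  by (cases x; cases y) (simp_all add: chi_def)

lemma chi_ind: "chi b = 1 - 2 * (if b = 1 then 1 else 0)"
  by (cases b) (simp_all add: chi_def)

lemma sum_chi_card: "finite A \<Longrightarrow> (\<Sum>c\<in>A. chi (f c)) = real (card A) - 2 * real (card {c\<in>A. f c = 1})"
proof -
  assume A: "finite A"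
  have "(\<Sum>c\<in>A. chi (f c)) = (\<Sum>c\<in>A. 1) - 2 * (\<Sum>c\<in>A. (if f c = 1 then 1 else 0))"
    by (simp add: chi_ind sum_subtractf sum_distrib_left)
  also have "(\<Sum>c\<in>A. (if f c = 1 then 1 else 0)) = (\<Sum>c\<in>{c\<in>A. f c = 1}. (1::real))"
    by (rule sum.inter_filter[symmetric, OF A])
  finally show ?thesis by simp
qed

lemma char_sum:
  assumes d: "d \<in> Ls s"
  shows "(\<Sum>c\<in>Ls s. chi (dot c d)) = (if d = replicate s 0 then 2 ^ s else 0)"
proof (cases "d = replicate s 0")
  case True
  then have "(\<Sum>c\<in>Ls s. chi (dot c d)) = (\<Sum>c\<in>Ls s. 1)"
    by (intro sum.cong) (simp_all add: dot_zero chi_def)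
  then show ?thesis using True card_Ls by simp
next
  case False
  have "(\<Sum>c\<in>Ls s. chi (dot c d)) = (\<Sum>c\<in>Ls s. chi (dot d c))"
    using d by (intro sum.cong) (simp_all add: dot_comm Ls_def)
  also have "\<dots> = real (card (Ls s)) - 2 * real (card {c\<in>Ls s. dot d c = 1})"
    by (rule sum_chi_card) simp
  also have "\<dots> = 0" using dot_balance[OF d False] card_Ls
    by (metis (no_types, lifting) diff_self of_nat_mult of_nat_numeral)
  finally show ?thesis using False by simp
qed

lemma sum_chi_xe: "(\<Sum>p\<in>(UNIV::'n::finite option set). chi (xe x p)) = real (CARD('n) + 1) - 2 * real (wt x)"
  by (simp add: sum_chi_card wt_def)

lemma map2_add_zero: "length x = length a \<Longrightarrow> (map2 (+) x a = replicate (length a) 0) \<longleftrightarrow> x = (a::bit list)"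
  by (auto simp: list_eq_iff_nth_eq bit_sum_zero)

lemma goodtuple_intro:
  fixes l :: "(bit^'n::finite) list"
  assumes li: "lindep l" and g: "goodV (lspan l)"
  shows "goodtuple l"
  unfolding goodtuple_def
proof
  let ?s = "length l"
  let ?W = "real (CARD('n) + 1)"
  fix a assume a: "a \<in> Ls ?s"
  have 1: "(\<Sum>c\<in>Ls ?s. chi (dot c (map2 (+) (fe l p) a))) = (if fe l p = a then 2 ^ ?s else 0)" for p
  proof -
    have "map2 (+) (fe l p) a \<in> Ls ?s" using a by (simp add: Ls_def)
    then have "(\<Sum>c\<in>Ls ?s. chi (dot c (map2 (+) (fe l p) a))) =
       (if map2 (+) (fe l p) a = replicate ?s 0 then 2 ^ ?s else 0)" by (rule char_sum)
    also have "(map2 (+) (fe l p) a = replicate ?s 0) \<longleftrightarrow> fe l p = a"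
      using map2_add_zero[of "fe l p" a] a by (simp add: Ls_def)
    finally show ?thesis .
  qed
  have 2: "(\<Sum>p\<in>(UNIV::'n option set). chi (xe (lc c l) p)) = (if c = replicate ?s 0 then ?W else 0)"
    if c: "c \<in> Ls ?s" for c
  proof (cases "c = replicate ?s 0")
    case True
    then have "lc c l = 0" using lc_zero by simp
    moreover have "wt (0::bit^'n) = 0" by (simp add: wt_def xe_def split: option.splits)
    ultimately show ?thesis using True sum_chi_xe[of "lc c l"] by simp
  next
    case False
    then have "lc c l \<noteq> 0" using li c by (auto simp: lindep_def Ls_def)
    moreover have "lc c l \<in> lspan l" using c by (simp add: lspan_def)
    ultimately have "2 * wt (lc c l) = CARD('n) + 1" using g by (simp add: goodV_def)
    then have "real (2 * wt (lc c l)) = ?W" by (metis of_nat_eq_iff)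
    then show ?thesis using False sum_chi_xe[of "lc c l"] by simp
  qed
  have "real (2 ^ ?s * fib l a) = (\<Sum>p\<in>(UNIV::'n option set). (if fe l p = a then 2 ^ ?s else 0))"
    by (simp add: fib_def sum.If_cases)
  also have "\<dots> = (\<Sum>p\<in>(UNIV::'n option set). \<Sum>c\<in>Ls ?s. chi (dot c (map2 (+) (fe l p) a)))"
    using 1 by simp
  also have "\<dots> = (\<Sum>p\<in>(UNIV::'n option set). \<Sum>c\<in>Ls ?s. chi (xe (lc c l) p) * chi (dot c a))"
    using a by (intro sum.cong refl) (simp add: dot_add chi_add xe_lc Ls_def)
  also have "\<dots> = (\<Sum>c\<in>Ls ?s. chi (dot c a) * (\<Sum>p\<in>(UNIV::'n option set). chi (xe (lc c l) p)))"
    by (subst sum.swap) (simp add: sum_distrib_left mult.commute)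
  also have "\<dots> = (\<Sum>c\<in>Ls ?s. (if c = replicate ?s 0 then chi (dot c a) * ?W else 0))"
    using 2 by (intro sum.cong refl) simp
  also have "\<dots> = ?W"
    using a by (subst sum.delta[OF finite_Ls]) (simp add: Ls_def dot_def chi_def)
  finally show "2 ^ ?s * fib l a = CARD('n) + 1" by (metis of_nat_eq_iff)
qed

lemma orth_charvec: "orth x (charvec B) \<longleftrightarrow> even (card ({t. x $ t = 1} \<inter> B))"
proof -
  have "(\<Sum>t\<in>UNIV. x $ t * charvec B $ t) = (\<Sum>t\<in>{t. x $ t = 1} \<inter> B. (1::bit))"
  proof -
    have "(\<Sum>t\<in>UNIV. x $ t * charvec B $ t) = (\<Sum>t\<in>UNIV. if t \<in> {t. x $ t = 1} \<inter> B then 1 else 0)"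
    proof (intro sum.cong refl)
      fix t show "x $ t * charvec B $ t = (if t \<in> {t. x $ t = 1} \<inter> B then 1 else 0)"
        using bit_cases2[of "x $ t"] by (auto simp: charvec_def)
    qed
    also have "\<dots> = (\<Sum>t\<in>{t. x $ t = 1} \<inter> B. (1::bit))"
      by (simp add: sum.If_cases Int_def)
    finally show ?thesis .
  qed
  also have "\<dots> = of_nat (card ({t. x $ t = 1} \<inter> B)) * 1" by (rule sum_constant)
  finally show ?thesis unfolding orth_def mult_1_right by (simp add: bit_of_nat)
qed

lemma wt_card: "wt x = card {t. x $ t = 1}"
proof -
  have "{p. xe x p = 1} = Some ` {t. x $ t = 1}"
    by (auto simp: xe_def split: option.splits)
  then show ?thesis unfolding wt_def by (simp add: card_image)
qed

lemma sts_unique: "is_STS S \<Longrightarrow> a \<noteq> b \<Longrightarrow> B1 \<in> S \<Longrightarrow> B2 \<in> S \<Longrightarrow> {a,b} \<subseteq> B1 \<Longrightarrow> {a,b} \<subseteq> B2 \<Longrightarrow> B1 = B2"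
  unfolding is_STS_def by blast

lemma sts_weight:
  fixes x :: "bit^'n::finite"
  assumes S: "is_STS S" and o: "\<forall>B\<in>S. orth x (charvec B)" and x: "x \<noteq> 0"
  shows "2 * wt x = CARD('n) + 1"
proof -
  define X where "X = {t. x $ t = 1}"
  define Y where "Y = UNIV - X"
  have "X \<noteq> {}" using x by (auto simp: X_def vec_eq_iff)
  then obtain x0 where x0: "x0 \<in> X" by blast
  define blk where "blk a b = (THE B. B \<in> S \<and> {a,b} \<subseteq> B)" for a b
  have blk: "blk a b \<in> S \<and> {a,b} \<subseteq> blk a b" if "a \<noteq> b" for a b
  proof -
    have "\<exists>!B. B \<in> S \<and> {a,b} \<subseteq> B" using S that by (simp add: is_STS_def)
    then show ?thesis unfolding blk_def by (rule theI')
  qed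
  have key: "card (B \<inter> X) = 2 \<and> card (B \<inter> Y) = 1" if B: "B \<in> S" "x0 \<in> B" for B
  proof -
    have c3: "card B = 3" using S B by (simp add: is_STS_def)
    have ev: "even (card (B \<inter> X))" using o B orth_charvec[of x B] by (simp add: X_def Int_commute)
    have "card (B \<inter> X) \<le> card B" by (rule card_mono) auto
    moreover have "card (B \<inter> X) > 0" using B x0 by (auto simp: card_gt_0_iff)
    ultimately have c2: "card (B \<inter> X) = 2" using ev c3 by presburger
    have "card ((B \<inter> X) \<union> (B \<inter> Y)) = card (B \<inter> X) + card (B \<inter> Y)"
      by (rule card_Un_disjoint) (auto simp: Y_def)
    moreover have "(B \<inter> X) \<union> (B \<inter> Y) = B" by (auto simp: Y_def)
    ultimately show ?thesis using c2 c3 by simp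
  qed
  define h where "h x' = the_elem (blk x0 x' \<inter> Y)" for x'
  define g where "g y = the_elem (blk x0 y \<inter> X - {x0})" for y
  have hx: "blk x0 x' \<inter> X = {x0, x'} \<and> blk x0 x' \<inter> Y = {h x'}" if x': "x' \<in> X - {x0}" for x'
  proof -
    have ne: "x0 \<noteq> x'" using x' by auto
    have k: "card (blk x0 x' \<inter> X) = 2 \<and> card (blk x0 x' \<inter> Y) = 1" using key blk[OF ne] by auto
    have "{x0, x'} \<subseteq> blk x0 x' \<inter> X" using blk[OF ne] x0 x' by auto
    moreover have "card {x0, x'} = 2" using ne by simp
    ultimately have "blk x0 x' \<inter> X = {x0, x'}" using k card_subset_eq[of "blk x0 x' \<inter> X" "{x0,x'}"]
      by auto
    moreover obtain y where "blk x0 x' \<inter> Y = {y}" using k by (meson card_1_singletonE)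
    ultimately show ?thesis by (simp add: h_def)
  qed
  have gy: "blk x0 y \<inter> Y = {y} \<and> blk x0 y \<inter> X - {x0} = {g y}" if y: "y \<in> Y" for y
  proof -
    have ne: "x0 \<noteq> y" using y x0 by (auto simp: Y_def)
    have k: "card (blk x0 y \<inter> X) = 2 \<and> card (blk x0 y \<inter> Y) = 1" using key blk[OF ne] by auto
    have yy: "y \<in> blk x0 y \<inter> Y" using blk[OF ne] y by auto
    obtain z where "blk x0 y \<inter> Y = {z}" using k by (meson card_1_singletonE)
    then have 1: "blk x0 y \<inter> Y = {y}" using yy by auto
    have "x0 \<in> blk x0 y \<inter> X" using blk[OF ne] x0 by auto
    then have "card (blk x0 y \<inter> X - {x0}) = 1" using k by (simp add: card_Diff_singleton)
    then obtain z where "blk x0 y \<inter> X - {x0} = {z}" by (meson card_1_singletonE)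
    then show ?thesis using 1 by (simp add: g_def)
  qed
  have "card (X - {x0}) = card Y"
  proof (rule card_bij_eq[of h _ _ g])
    show "inj_on h (X - {x0})"
    proof (rule inj_onI)
      fix a b assume a: "a \<in> X - {x0}" and b: "b \<in> X - {x0}" and e: "h a = h b"
      have ya: "h a \<in> blk x0 a" "h a \<in> Y" using hx[OF a] by auto
      have yb: "h a \<in> blk x0 b" using hx[OF b] e by auto
      have ne: "x0 \<noteq> h a" using ya x0 by (auto simp: Y_def)
      have na: "x0 \<noteq> a" "x0 \<noteq> b" using a b by auto
      have s1: "blk x0 a \<in> S" "{x0, h a} \<subseteq> blk x0 a" using blk[OF na(1)] ya by auto
      have s2: "blk x0 b \<in> S" "{x0, h a} \<subseteq> blk x0 b" using blk[OF na(2)] yb by auto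
      have "blk x0 a = blk x0 b" by (rule sts_unique[OF S ne s1(1) s2(1) s1(2) s2(2)])
      then have "{x0, a} = {x0, b}" using conjunct1[OF hx[OF a]] conjunct1[OF hx[OF b]] by metis
      then have "a \<in> {x0, b}" by blast
      then show "a = b" using na by blast
    qed
    show "h ` (X - {x0}) \<subseteq> Y"
    proof (rule image_subsetI)
      fix x' assume "x' \<in> X - {x0}" then show "h x' \<in> Y" using hx[of x'] by auto
    qed
    show "inj_on g Y"
    proof (rule inj_onI)
      fix a b assume a: "a \<in> Y" and b: "b \<in> Y" and e: "g a = g b"
      have za: "g a \<in> blk x0 a" "g a \<in> X" "g a \<noteq> x0" using gy[OF a] by auto
      have zb: "g a \<in> blk x0 b" using gy[OF b] e by auto
      have na: "x0 \<noteq> a" "x0 \<noteq> b" using a b x0 by (auto simp: Y_def)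
      have s1: "blk x0 a \<in> S" "{x0, g a} \<subseteq> blk x0 a" using blk[OF na(1)] za by auto
      have s2: "blk x0 b \<in> S" "{x0, g a} \<subseteq> blk x0 b" using blk[OF na(2)] zb by auto
      have "blk x0 a = blk x0 b" by (rule sts_unique[OF S za(3)[symmetric] s1(1) s2(1) s1(2) s2(2)])
      then have "{a} = {b}" using conjunct1[OF gy[OF a]] conjunct1[OF gy[OF b]] by metis
      then show "a = b" by blast
    qed
    show "g ` Y \<subseteq> X - {x0}"
    proof (rule image_subsetI)
      fix y assume "y \<in> Y" then show "g y \<in> X - {x0}" using gy[of y] by auto
    qed
  qed simp_all
  moreover have "card Y = CARD('n) - card X" unfolding Y_def
    by (rule card_Diff_subset) auto
  moreover have "card X \<le> CARD('n)" by (rule card_mono) auto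
  moreover have "card (X - {x0}) = card X - 1" using x0 by simp
  moreover have "card X > 0" using x0 by (auto simp: card_gt_0_iff)
  ultimately have "2 * card X = CARD('n) + 1" by linarith
  then show ?thesis by (simp add: wt_card X_def)
qed

lemma Ddot_good: "V \<in> Ddot k \<Longrightarrow> vec.subspace V \<and> vec.dim V = k \<and> goodV V"
  unfolding Ddot_def goodV_def using sts_weight by blast

lemma exist_perm:
  fixes f g :: "'n::finite \<Rightarrow> 'b"
  assumes c: "\<And>a. card {t. f t = a} = card {t. g t = a}"
  obtains \<sigma> where "bij \<sigma>" "\<And>t. g (\<sigma> t) = f t"
proof -
  have "\<forall>a. \<exists>h. bij_betw h {t. f t = a} {t. g t = a}"
    using c by (auto intro: finite_same_card_bij)
  from choice[OF this] obtain H where H: "\<And>a. bij_betw (H a) {t. f t = a} {t. g t = a}" by blast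
  define \<sigma> where "\<sigma> t = H (f t) t" for t
  have g: "g (\<sigma> t) = f t" for t
    using bij_betw_apply[OF H[of "f t"], of t] by (simp add: \<sigma>_def)
  have "inj \<sigma>"
  proof (rule injI)
    fix t t' assume e: "\<sigma> t = \<sigma> t'"
    then have ft: "f t = f t'" using g by metis
    then have "H (f t) t = H (f t) t'" using e by (simp add: \<sigma>_def)
    moreover have "inj_on (H (f t)) {s. f s = f t}" using H bij_betw_def by blast
    ultimately show "t = t'" using ft by (auto dest: inj_onD)
  qed
  then have "bij \<sigma>" using finite_UNIV_inj_surj[of \<sigma>] by (simp add: bij_def)
  then show ?thesis using that g by blast
qed

lemma fe_None: "fe l None = replicate (length l) 0"
  by (simp add: fe_def xe_def map_replicate_const)

lemma fib_card: "fib l a = card {t. fe l (Some t) = a} + (if a = replicate (length l) 0 then 1 else 0)"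
proof -
  have "{p. fe l p = a} = Some ` {t. fe l (Some t) = a} \<union> (if a = replicate (length l) 0 then {None} else {})"
  proof (rule set_eqI)
    fix p show "p \<in> {p. fe l p = a} \<longleftrightarrow> p \<in> Some ` {t. fe l (Some t) = a} \<union> (if a = replicate (length l) 0 then {None} else {})"
      by (cases p) (auto simp: fe_None)
  qed
  moreover have "card (Some ` {t. fe l (Some t) = a} \<union> (if a = replicate (length l) 0 then {None} else {})) =
      card {t. fe l (Some t) = a} + (if a = replicate (length l) 0 then 1 else 0)"
    by (subst card_Un_disjoint) (auto simp: card_image)
  ultimately show ?thesis unfolding fib_def by simp
qed

lemma goodtuple_fib:
  fixes l l' :: "(bit^'n::finite) list"
  assumes "goodtuple l" "goodtuple l'" "length l = length l'"
  shows "fib l a = fib l' a"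
proof (cases "a \<in> Ls (length l)")
  case True
  then show ?thesis using assms unfolding goodtuple_def
    by (metis mult_left_cancel power_not_zero zero_neq_numeral)
next
  case False
  then have "{p. fe l p = a} = {}" "{p. fe l' p = a} = {}" using assms(3) fe_Ls
    by (metis (mono_tags) empty_Collect_eq)+
  then show ?thesis by (simp add: fib_def)
qed

lemma lc_nth_comp: "length c = length l \<Longrightarrow> (lc c l) $ t = (\<Sum>k<length l. c!k * (l!k) $ t)"
  by (simp add: lc_def)

lemma Ddot_intro:
  fixes V :: "(bit^'n::finite) set"
  assumes ne: "Ddot j \<noteq> ({} :: (bit^'n) set set)"
    and V: "vec.subspace V" "vec.dim V = j" "goodV V"
  shows "V \<in> Ddot j"
proof -
  obtain V0 :: "(bit^'n) set" where V0: "V0 \<in> Ddot j" using ne by blast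
  then obtain S0 where S0: "is_STS S0" "\<forall>v\<in>V0. \<forall>B\<in>S0. orth v (charvec B)" and V0s: "vec.subspace V0" "vec.dim V0 = j"
    unfolding Ddot_def by blast
  have g0: "goodV V0" using Ddot_good[OF V0] by simp
  obtain l0 where l0: "lindep l0" "lspan l0 = V0" "length l0 = j" using list_basis[OF V0s(1)] V0s by metis
  obtain l where l: "lindep l" "lspan l = V" "length l = j" using list_basis[OF V(1)] V by metis
  have gt0: "goodtuple l0" using goodtuple_intro[OF l0(1)] g0 l0 by simp
  have gt: "goodtuple l" using goodtuple_intro[OF l(1)] V l by simp
  have "card {t. fe l0 (Some t) = a} = card {t. fe l (Some t) = a}" for a
    using goodtuple_fib[OF gt0 gt] fib_card[of l0 a] fib_card[of l a] l0 l by simp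
  then obtain \<sigma> where sg: "bij \<sigma>" "\<And>t. fe l (Some (\<sigma> t)) = fe l0 (Some t)"
    using exist_perm[of "\<lambda>t. fe l0 (Some t)" "\<lambda>t. fe l (Some t)"] by metis
  have comp: "(l!k) $ (\<sigma> t) = (l0!k) $ t" if "k < j" for k t
  proof -
    have "fe l (Some (\<sigma> t)) ! k = fe l0 (Some t) ! k" using sg by simp
    then show ?thesis using that l l0 by (simp add: fe_def xe_def)
  qed
  have inj: "inj \<sigma>" using sg bij_is_inj by blast
  define S where "S = (\<lambda>B. \<sigma> ` B) ` S0"
  have STS: "is_STS S" unfolding is_STS_def
  proof (intro conjI ballI allI impI)
    fix B assume "B \<in> S"
    then obtain B0 where "B0 \<in> S0" "B = \<sigma> ` B0" by (auto simp: S_def)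
    then show "card B = 3" using S0 inj by (simp add: is_STS_def card_image inj_on_subset)
  next
    fix x y :: 'n assume xy: "x \<noteq> y"
    let ?x = "inv \<sigma> x" and ?y = "inv \<sigma> y"
    have sx: "\<sigma> ?x = x" "\<sigma> ?y = y" using bij_is_surj[OF sg(1)] by (simp_all add: surj_f_inv_f)
    have "?x \<noteq> ?y" using xy sx by metis
    then obtain B0 where B0: "B0 \<in> S0" "{?x, ?y} \<subseteq> B0"
      and u: "\<And>B'. B' \<in> S0 \<Longrightarrow> {?x, ?y} \<subseteq> B' \<Longrightarrow> B' = B0"
      using S0(1) unfolding is_STS_def by metis
    show "\<exists>!B. B \<in> S \<and> {x, y} \<subseteq> B"
    proof (rule ex1I[of _ "\<sigma> ` B0"])
      show "\<sigma> ` B0 \<in> S \<and> {x, y} \<subseteq> \<sigma> ` B0" using B0 sx by (auto simp: S_def) (metis image_eqI)+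
    next
      fix B assume B: "B \<in> S \<and> {x, y} \<subseteq> B"
      then obtain B1 where B1: "B1 \<in> S0" "B = \<sigma> ` B1" by (auto simp: S_def)
      have "{?x, ?y} \<subseteq> B1" using B B1 sx inj by (auto simp: inj_image_mem_iff)
      then have "B1 = B0" using u B1 by blast
      then show "B = \<sigma> ` B0" using B1 by simp
    qed
  qed
  have orthV: "\<forall>v\<in>V. \<forall>B\<in>S. orth v (charvec B)"
  proof (intro ballI)
    fix v B assume v: "v \<in> V" and B: "B \<in> S"
    obtain c where c: "length c = j" "v = lc c l" using v l by (auto simp: lspan_def Ls_def)
    obtain B0 where B0: "B0 \<in> S0" "B = \<sigma> ` B0" using B by (auto simp: S_def)
    define v0 where "v0 = lc c l0"
    have v0: "v0 \<in> V0" using l0 c by (auto simp: lspan_def Ls_def v0_def)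
    have vv: "v $ (\<sigma> t) = v0 $ t" for t
      unfolding c(2) v0_def using c l l0 comp by (simp add: lc_nth_comp)
    have "(\<Sum>t\<in>UNIV. v $ t * charvec B $ t) = (\<Sum>t\<in>UNIV. v $ (\<sigma> t) * charvec B $ (\<sigma> t))"
      by (rule sum.reindex_bij_betw[symmetric]) (use sg(1) in simp)
    also have "\<dots> = (\<Sum>t\<in>UNIV. v0 $ t * charvec B0 $ t)"
      using B0 inj by (intro sum.cong refl) (simp add: vv charvec_def inj_image_mem_iff)
    finally show "orth v (charvec B)" using S0(2) v0 B0 by (simp add: orth_def)
  qed
  show ?thesis unfolding Ddot_def using V STS orthV by blast
qed

lemma Ddot_iff:
  assumes ne: "Ddot j \<noteq> ({} :: (bit^'n::finite) set set)"
  shows "(V \<in> (Ddot j :: (bit^'n) set set)) \<longleftrightarrow> vec.subspace V \<and> vec.dim V = j \<and> goodV V"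
  using Ddot_intro[OF ne] Ddot_good by blast

definition Gb :: "(bit^'n::finite) list \<Rightarrow> (bit^'n) set" where
  "Gb l = {b. \<forall>a\<in>Ls (length l). 2 * card {p::'n option. fe l p = a \<and> xe b p = 1} = fib l a}"

lemma fe_snoc: "fe (l@[b]) p = fe l p @ [xe b p]" by (simp add: fe_def)

lemma fib_snoc: "fib (l@[b]) (a@[x]) = card {p. fe l p = a \<and> xe b p = x}"
  by (simp add: fib_def fe_snoc)

lemma fib_split: "fib l a = card {p. fe l p = a \<and> xe b p = 0} + card {p. fe l p = a \<and> xe b p = 1}"
proof -
  have "{p. fe l p = a} = {p. fe l p = a \<and> xe b p = 0} \<union> {p. fe l p = a \<and> xe b p = 1}"
    using bit_cases2 by auto
  moreover have "card ({p. fe l p = a \<and> xe b p = 0} \<union> {p. fe l p = a \<and> xe b p = 1}) =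
     card {p. fe l p = a \<and> xe b p = 0} + card {p. fe l p = a \<and> xe b p = 1}"
    by (rule card_Un_disjoint) auto
  ultimately show ?thesis unfolding fib_def by simp
qed

lemma Ls_Suc: "a' \<in> Ls (Suc s) \<longleftrightarrow> (\<exists>a x. a' = a@[x] \<and> a \<in> Ls s)"
proof
  assume "a' \<in> Ls (Suc s)"
  then have "a' = butlast a' @ [last a'] \<and> butlast a' \<in> Ls s"
    by (cases a' rule: rev_cases) (auto simp: Ls_def)
  then show "\<exists>a x. a' = a@[x] \<and> a \<in> Ls s" by blast
qed (auto simp: Ls_def)

lemma goodtuple_snoc:
  fixes l :: "(bit^'n::finite) list"
  shows "goodtuple (l@[b]) \<longleftrightarrow> goodtuple l \<and> b \<in> Gb l"
proof
  let ?s = "length l"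
  let ?n = "\<lambda>a x. card {p::'n option. fe l p = a \<and> xe b p = x}"
  assume G: "goodtuple (l@[b])"
  have n: "2 ^ Suc ?s * ?n a x = CARD('n) + 1" if "a \<in> Ls ?s" for a x
  proof -
    have "a@[x] \<in> Ls (length (l@[b]))" using that by (simp add: Ls_def)
    then have "2 ^ length (l@[b]) * fib (l@[b]) (a@[x]) = CARD('n) + 1"
      using G unfolding goodtuple_def by blast
    then show ?thesis by (simp add: fib_snoc)
  qed
  have e: "?n a 0 = ?n a 1" if "a \<in> Ls ?s" for a
  proof -
    have "2 ^ Suc ?s * ?n a 0 = 2 ^ Suc ?s * ?n a 1" using n[OF that, of 0] n[OF that, of 1] by simp
    moreover have "(2::nat) ^ Suc ?s \<noteq> 0" by simp
    ultimately show ?thesis using mult_left_cancel by blast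
  qed
  show "goodtuple l \<and> b \<in> Gb l"
  proof
    show "goodtuple l" unfolding goodtuple_def
    proof
      fix a assume a: "a \<in> Ls ?s"
      have "fib l a = 2 * ?n a 1" using fib_split[of l a b] e[OF a] by simp
      then show "2 ^ ?s * fib l a = CARD('n) + 1" using n[OF a, of 1] by simp
    qed
    have "\<forall>a\<in>Ls ?s. 2 * ?n a 1 = fib l a"
    proof
      fix a assume a: "a \<in> Ls ?s"
      show "2 * ?n a 1 = fib l a" using fib_split[of l a b] e[OF a] by simp
    qed
    then show "b \<in> Gb l" unfolding Gb_def by simp
  qed
next
  let ?s = "length l"
  let ?n = "\<lambda>a x. card {p::'n option. fe l p = a \<and> xe b p = x}"
  assume A: "goodtuple l \<and> b \<in> Gb l"
  show "goodtuple (l@[b])" unfolding goodtuple_def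
  proof
    fix a' assume "a' \<in> Ls (length (l@[b]))"
    then obtain a x where a: "a' = a@[x]" "a \<in> Ls ?s" using Ls_Suc by auto
    have f: "2 ^ ?s * fib l a = CARD('n) + 1" using A a unfolding goodtuple_def by blast
    have g: "2 * ?n a 1 = fib l a" using A a unfolding Gb_def by blast
    have "?n a 0 = ?n a 1" using g fib_split[of l a b] by simp
    then have "2 * ?n a x = fib l a" using g bit_cases2[of x] by auto
    then have "2 ^ Suc ?s * ?n a x = 2 ^ ?s * fib l a" by simp
    then have "2 ^ Suc ?s * ?n a x = CARD('n) + 1" using f by simp
    then show "2 ^ length (l@[b]) * fib (l@[b]) a' = CARD('n) + 1" using a by (simp add: fib_snoc)
  qed
qed

lemma card_Gb:
  fixes l :: "(bit^'n::finite) list"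
  assumes g: "goodtuple l" and d: "2 ^ Suc (length l) dvd CARD('n) + 1"
  defines "m \<equiv> (CARD('n) + 1) div 2 ^ length l"
  shows "card (Gb l) = (m choose (m div 2)) ^ (2 ^ length l - 1) * ((m - 1) choose (m div 2))"
proof -
  let ?s = "length l"
  let ?W = "CARD('n) + 1"
  define h where "h = m div 2"
  define Fa where "Fa a = {t. fe l (Some t) = a}" for a
  define z where "z = replicate ?s (0::bit)"
  have z: "z \<in> Ls ?s" by (simp add: z_def Ls_def)
  have fibm: "fib l a = m" if "a \<in> Ls ?s" for a
  proof -
    have "2 ^ ?s * fib l a = ?W" using g that unfolding goodtuple_def by blast
    then show ?thesis unfolding m_def by (metis nonzero_mult_div_cancel_left power_not_zero zero_neq_numeral)
  qed
  have m2: "m = 2 * h"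
  proof -
    obtain q where "?W = 2 ^ Suc ?s * q" using d by (elim dvdE)
    then have "m = 2 * q" unfolding m_def by simp
    then show ?thesis unfolding h_def by simp
  qed
  have cFa: "card (Fa a) = m - (if a = z then 1 else 0)" if "a \<in> Ls ?s" for a
    using fib_card[of l a] fibm[OF that] by (simp add: Fa_def z_def)
  define supp where "supp b = {t. (b::bit^'n) $ t = 1}" for b
  have n1: "card {p::'n option. fe l p = a \<and> xe b p = 1} = card (Fa a \<inter> supp b)" for a b
  proof -
    have "{p::'n option. fe l p = a \<and> xe b p = 1} = Some ` (Fa a \<inter> supp b)"
    proof (rule set_eqI)
      fix p show "p \<in> {p::'n option. fe l p = a \<and> xe b p = 1} \<longleftrightarrow> p \<in> Some ` (Fa a \<inter> supp b)"
        by (cases p) (auto simp: xe_def Fa_def supp_def)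
    qed
    then show ?thesis by (simp add: card_image)
  qed
  define Q where "Q = {S::'n set. \<forall>a\<in>Ls ?s. card (Fa a \<inter> S) = h}"
  have GbQ: "Gb l = {b. \<forall>a\<in>Ls ?s. card (Fa a \<inter> supp b) = h}"
    unfolding Gb_def using n1 fibm m2 by auto
  have "bij_betw supp (Gb l) Q"
  proof (rule bij_betw_byWitness[where f'=charvec])
    show "\<forall>b\<in>Gb l. charvec (supp b) = b"
    proof
      fix b :: "bit^'n" show "charvec (supp b) = b"
        unfolding charvec_def supp_def vec_eq_iff using bit_cases2 by auto
    qed
    have cs: "supp (charvec S) = S" for S by (auto simp: supp_def charvec_def)
    show "\<forall>S\<in>Q. supp (charvec S) = S" using cs by blast
    show "supp ` Gb l \<subseteq> Q" unfolding GbQ Q_def by auto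
    show "charvec ` Q \<subseteq> Gb l" unfolding GbQ Q_def using cs by auto
  qed
  then have c1: "card (Gb l) = card Q" by (rule bij_betw_same_card)
  define P where "P = PiE (Ls ?s) (\<lambda>a. {T. T \<subseteq> Fa a \<and> card T = h})"
  have allin: "\<exists>a\<in>Ls ?s. t \<in> Fa a" for t by (auto simp: Fa_def)
  have Fdisj: "a = a'" if "t \<in> Fa a" "t \<in> Fa a'" for t a a' using that by (simp add: Fa_def)
  have "bij_betw (\<lambda>S. restrict (\<lambda>a. Fa a \<inter> S) (Ls ?s)) Q P"
  proof (rule bij_betw_byWitness[where f'="\<lambda>\<phi>. \<Union>a\<in>Ls ?s. \<phi> a"])
    show "\<forall>S\<in>Q. (\<Union>a\<in>Ls ?s. restrict (\<lambda>a. Fa a \<inter> S) (Ls ?s) a) = S"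
    proof
      fix S assume "S \<in> Q"
      have "(\<Union>a\<in>Ls ?s. restrict (\<lambda>a. Fa a \<inter> S) (Ls ?s) a) = (\<Union>a\<in>Ls ?s. Fa a \<inter> S)"
        by (intro SUP_cong refl) simp
      also have "\<dots> = S"
      proof (rule set_eqI)
        fix t show "t \<in> (\<Union>a\<in>Ls ?s. Fa a \<inter> S) \<longleftrightarrow> t \<in> S" using allin[of t] by blast
      qed
      finally show "(\<Union>a\<in>Ls ?s. restrict (\<lambda>a. Fa a \<inter> S) (Ls ?s) a) = S" .
    qed
    have mem: "\<phi> a \<subseteq> Fa a \<and> card (\<phi> a) = h" if "\<phi> \<in> P" "a \<in> Ls ?s" for \<phi> a
    proof -
      have "\<phi> a \<in> {T. T \<subseteq> Fa a \<and> card T = h}" using PiE_mem[OF that(1)[unfolded P_def] that(2)] .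
      then show ?thesis by simp
    qed
    have key: "Fa a \<inter> (\<Union>a'\<in>Ls ?s. \<phi> a') = \<phi> a" if "\<phi> \<in> P" "a \<in> Ls ?s" for \<phi> a
    proof
      show "Fa a \<inter> (\<Union>a'\<in>Ls ?s. \<phi> a') \<subseteq> \<phi> a"
      proof
        fix t assume "t \<in> Fa a \<inter> (\<Union>a'\<in>Ls ?s. \<phi> a')"
        then obtain a' where a': "a' \<in> Ls ?s" "t \<in> \<phi> a'" "t \<in> Fa a" by blast
        have "\<phi> a' \<subseteq> Fa a'" using mem[OF that(1) a'(1)] by simp
        then have "a = a'" using a' Fdisj by blast
        then show "t \<in> \<phi> a" using a' by simp
      qed
      show "\<phi> a \<subseteq> Fa a \<inter> (\<Union>a'\<in>Ls ?s. \<phi> a')" using mem[OF that] that(2) by blast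
    qed
    show "\<forall>\<phi>\<in>P. restrict (\<lambda>a. Fa a \<inter> (\<Union>a'\<in>Ls ?s. \<phi> a')) (Ls ?s) = \<phi>"
    proof
      fix \<phi> assume ph: "\<phi> \<in> P"
      show "restrict (\<lambda>a. Fa a \<inter> (\<Union>a'\<in>Ls ?s. \<phi> a')) (Ls ?s) = \<phi>"
      proof (rule ext)
        fix a show "restrict (\<lambda>a. Fa a \<inter> (\<Union>a'\<in>Ls ?s. \<phi> a')) (Ls ?s) a = \<phi> a"
        proof (cases "a \<in> Ls ?s")
          case True then show ?thesis using key[OF ph True] restrict_apply'[OF True] by metis
        next
          case False
          have "\<phi> a = undefined" using PiE_arb[OF ph[unfolded P_def] False] .
          moreover have "restrict (\<lambda>a. Fa a \<inter> (\<Union>a'\<in>Ls ?s. \<phi> a')) (Ls ?s) a = undefined"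
            using False by (simp add: restrict_def)
          ultimately show ?thesis by simp
        qed
      qed
    qed
    show "(\<lambda>S. restrict (\<lambda>a. Fa a \<inter> S) (Ls ?s)) ` Q \<subseteq> P"
    proof (rule image_subsetI)
      fix S assume "S \<in> Q"
      then show "restrict (\<lambda>a. Fa a \<inter> S) (Ls ?s) \<in> P" unfolding Q_def P_def
        by (subst restrict_PiE_iff) blast
    qed
    show "(\<lambda>\<phi>. \<Union>a\<in>Ls ?s. \<phi> a) ` P \<subseteq> Q"
    proof
      fix S assume "S \<in> (\<lambda>\<phi>. \<Union>a\<in>Ls ?s. \<phi> a) ` P"
      then obtain \<phi> where ph: "\<phi> \<in> P" "S = (\<Union>a\<in>Ls ?s. \<phi> a)" by blast
      have "card (Fa a \<inter> S) = h" if "a \<in> Ls ?s" for a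
        using key[OF ph(1) that] mem[OF ph(1) that] ph(2) by simp
      then show "S \<in> Q" unfolding Q_def by blast
    qed
  qed
  then have c2: "card Q = card P" by (rule bij_betw_same_card)
  have c3: "card P = (\<Prod>a\<in>Ls ?s. card (Fa a) choose h)"
    unfolding P_def by (simp add: card_PiE n_subsets)
  also have "\<dots> = (card (Fa z) choose h) * (\<Prod>a\<in>Ls ?s - {z}. card (Fa a) choose h)"
    using z by (simp add: prod.remove)
  also have "(\<Prod>a\<in>Ls ?s - {z}. card (Fa a) choose h) = (\<Prod>a\<in>Ls ?s - {z}. m choose h)"
    using cFa by (intro prod.cong) auto
  also have "\<dots> = (m choose h) ^ (2 ^ ?s - 1)"
    using z by (simp add: card_Diff_singleton card_Ls)
  also have "card (Fa z) = m - 1" using cFa[OF z] by simp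
  finally show ?thesis using c1 c2 unfolding h_def by simp
qed

definition Bc :: "nat \<Rightarrow> nat \<Rightarrow> nat" where
  "Bc W s = ((W div 2 ^ s) choose (W div 2 ^ s div 2)) ^ (2 ^ s - 1) * ((W div 2 ^ s - 1) choose (W div 2 ^ s div 2))"

lemma finite_bit_UNIV: "finite (UNIV :: bit set)"
proof -
  have u: "(UNIV::bit set) = {0,1}" using bit_cases2 by auto
  show ?thesis by (subst u) simp
qed

lemma finite_bitvec_UNIV: "finite (UNIV :: (bit^'n::finite) set)"
proof -
  have "(UNIV::('n \<Rightarrow> bit) set) = PiE UNIV (\<lambda>_. UNIV)" by (simp add: PiE_UNIV_domain)
  moreover have "finite (PiE (UNIV::'n set) (\<lambda>_. UNIV::bit set))"
    by (rule finite_PiE) (simp_all add: finite_bit_UNIV)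
  ultimately have "finite (UNIV::('n \<Rightarrow> bit) set)" by simp
  then have "finite (vec_lambda ` (UNIV::('n \<Rightarrow> bit) set))" by simp
  moreover have "vec_lambda ` (UNIV::('n \<Rightarrow> bit) set) = UNIV"
    by (metis surjI vec_lambda_eta)
  ultimately show ?thesis by simp
qed

lemma finite_bitvec[simp]: "finite (A :: (bit^'n::finite) set)"
  using finite_subset[OF subset_UNIV finite_bitvec_UNIV] .

lemma finite_lists_k: "finite {bs :: (bit^'n::finite) list. length bs = k}"
  using finite_lists_length_eq[of "UNIV::(bit^'n) set" k] finite_bitvec_UNIV by simp

lemma snoc_image:
  "{bs. length bs = Suc k \<and> P bs} = (\<lambda>(bs,b). bs@[b]) ` {(bs,b). length bs = k \<and> P (bs@[b])}"
proof (rule set_eqI)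
  fix x show "x \<in> {bs. length bs = Suc k \<and> P bs} \<longleftrightarrow> x \<in> (\<lambda>(bs,b). bs@[b]) ` {(bs,b). length bs = k \<and> P (bs@[b])}"
  proof
    assume "x \<in> {bs. length bs = Suc k \<and> P bs}"
    then have x: "length x = Suc k" "P x" by auto
    then have "x = butlast x @ [last x]" by (metis append_butlast_last_id list.size(3) nat.distinct(1))
    then show "x \<in> (\<lambda>(bs,b). bs@[b]) ` {(bs,b). length bs = k \<and> P (bs@[b])}"
      using x by (intro image_eqI[of _ _ "(butlast x, last x)"]) auto
  qed auto
qed

lemma inj_snoc: "inj_on (\<lambda>(bs,b). bs@[b]) A"
  by (rule inj_onI) auto

lemma card_T:
  fixes us :: "(bit^'n::finite) list"
  assumes gu: "goodtuple us" and dv: "2 ^ j dvd CARD('n) + 1"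
  shows "length us + k \<le> j \<Longrightarrow> card {bs. length bs = k \<and> goodtuple (us@bs)} = (\<Prod>r<k. Bc (CARD('n) + 1) (length us + r))"
proof (induction k)
  case 0
  have "{bs. length bs = 0 \<and> goodtuple (us@bs)} = {[]}" using gu by auto
  then show ?case by simp
next
  case (Suc k)
  let ?T = "\<lambda>k. {bs. length bs = k \<and> goodtuple (us@bs)}"
  have "{(bs,b). length bs = k \<and> goodtuple (us@bs@[b])} = Sigma (?T k) (\<lambda>bs. Gb (us@bs))"
    using goodtuple_snoc[of "us@_"] by auto
  then have e: "?T (Suc k) = (\<lambda>(bs,b). bs@[b]) ` Sigma (?T k) (\<lambda>bs. Gb (us@bs))"
    using snoc_image[of k "\<lambda>bs. goodtuple (us@bs)"] by simp
  have fin: "finite (?T k)" by (rule finite_subset[OF _ finite_lists_k[of k]]) auto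
  have "card (?T (Suc k)) = card (Sigma (?T k) (\<lambda>bs. Gb (us@bs)))"
    unfolding e by (rule card_image[OF inj_snoc])
  also have "\<dots> = (\<Sum>bs\<in>?T k. card (Gb (us@bs)))" using fin by (simp add: card_SigmaI)
  also have "\<dots> = (\<Sum>bs\<in>?T k. Bc (CARD('n) + 1) (length us + k))"
  proof (intro sum.cong refl)
    fix bs assume bs: "bs \<in> ?T k"
    have "2 ^ Suc (length (us@bs)) dvd (2::nat) ^ j"
      using Suc.prems bs by (intro le_imp_power_dvd) simp
    then have "2 ^ Suc (length (us@bs)) dvd CARD('n) + 1" using dv dvd_trans by blast
    then show "card (Gb (us@bs)) = Bc (CARD('n) + 1) (length us + k)"
      using card_Gb[of "us@bs"] bs by (simp add: Bc_def)
  qed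
  also have "\<dots> = card (?T k) * Bc (CARD('n) + 1) (length us + k)" by simp
  also have "card (?T k) = (\<Prod>r<k. Bc (CARD('n) + 1) (length us + r))" using Suc by simp
  finally show ?case by simp
qed

lemma card_E:
  fixes us :: "(bit^'n::finite) list"
  assumes V: "vec.subspace V" "card V = 2 ^ j" and us: "lindep us" "set us \<subseteq> V"
  shows "length us + k \<le> j \<Longrightarrow> card {bs. length bs = k \<and> set bs \<subseteq> V \<and> lindep (us@bs)} = (\<Prod>r<k. 2 ^ j - 2 ^ (length us + r))"
proof (induction k)
  case 0
  have "{bs. length bs = 0 \<and> set bs \<subseteq> V \<and> lindep (us@bs)} = {[]}" using us by auto
  then show ?case by simp
next
  case (Suc k)
  let ?E = "\<lambda>k. {bs. length bs = k \<and> set bs \<subseteq> V \<and> lindep (us@bs)}"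
  have "{(bs,b). length bs = k \<and> set (bs@[b]) \<subseteq> V \<and> lindep (us@bs@[b])} = Sigma (?E k) (\<lambda>bs. V - lspan (us@bs))"
    using lindep_append[of "us@_"] by auto
  then have e: "?E (Suc k) = (\<lambda>(bs,b). bs@[b]) ` Sigma (?E k) (\<lambda>bs. V - lspan (us@bs))"
    using snoc_image[of k "\<lambda>bs. set bs \<subseteq> V \<and> lindep (us@bs)"] by simp
  have fin: "finite (?E k)" by (rule finite_subset[OF _ finite_lists_k[of k]]) auto
  have "card (?E (Suc k)) = card (Sigma (?E k) (\<lambda>bs. V - lspan (us@bs)))"
    unfolding e by (rule card_image[OF inj_snoc])
  also have "\<dots> = (\<Sum>bs\<in>?E k. card (V - lspan (us@bs)))" using fin by (simp add: card_SigmaI)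
  also have "\<dots> = (\<Sum>bs\<in>?E k. 2 ^ j - 2 ^ (length us + k))"
  proof (intro sum.cong refl)
    fix bs assume bs: "bs \<in> ?E k"
    have sub: "lspan (us@bs) \<subseteq> V" using lspan_sub[OF V(1)] bs us by simp
    have "card (lspan (us@bs)) = 2 ^ (length us + k)" using card_lspan[of "us@bs"] bs by simp
    then show "card (V - lspan (us@bs)) = 2 ^ j - 2 ^ (length us + k)"
      using sub V(2) by (simp add: card_Diff_subset)
  qed
  also have "\<dots> = card (?E k) * (2 ^ j - 2 ^ (length us + k))" by simp
  also have "card (?E k) = (\<Prod>r<k. 2 ^ j - 2 ^ (length us + r))" using Suc by simp
  finally show ?case by simp
qed

lemma count_main:
  fixes U :: "(bit^'n::finite) set"
  assumes U: "vec.subspace U" "vec.dim U = i" "goodV U" and ij: "i \<le> j"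
    and dv: "2 ^ j dvd CARD('n) + 1"
  shows "card {V. vec.subspace V \<and> vec.dim V = j \<and> goodV V \<and> U \<subseteq> V} * (\<Prod>r<j-i. 2 ^ j - 2 ^ (i + r))
       = (\<Prod>r<j-i. Bc (CARD('n) + 1) (i + r))"
proof -
  obtain us where us: "lindep us" "lspan us = U" "length us = i" using list_basis[OF U(1)] U(2) by metis
  have gu: "goodtuple us" using goodtuple_intro[OF us(1)] us(2) U(3) by simp
  define VV where "VV = {V. vec.subspace V \<and> vec.dim V = j \<and> goodV V \<and> U \<subseteq> V}"
  define T where "T = {bs. length bs = j - i \<and> goodtuple (us@bs)}"
  define P where "P V = {bs. length bs = j - i \<and> set bs \<subseteq> V \<and> lindep (us@bs)}" for V
  have usV: "set us \<subseteq> V" if "V \<in> VV" for V using that set_lspan[of us] us(2) by (auto simp: VV_def)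
  have cV: "card V = 2 ^ j" if "V \<in> VV" for V using that card_subspace by (auto simp: VV_def)
  have sp: "lspan (us@bs) = V" if V: "V \<in> VV" and bs: "bs \<in> P V" for V bs
  proof -
    have sub: "lspan (us@bs) \<subseteq> V" using lspan_sub[of V "us@bs"] V bs usV[OF V] by (auto simp: VV_def P_def)
    have "card (lspan (us@bs)) = 2 ^ j" using card_lspan[of "us@bs"] bs us ij by (simp add: P_def)
    then show ?thesis using sub cV[OF V] by (simp add: card_subset_eq)
  qed
  have TU: "T = (\<Union>V\<in>VV. P V)"
  proof
    show "T \<subseteq> (\<Union>V\<in>VV. P V)"
    proof
      fix bs assume bs: "bs \<in> T"
      then have g: "goodtuple (us@bs)" and len: "length bs = j - i" by (auto simp: T_def)
      have li: "lindep (us@bs)" and gv: "goodV (lspan (us@bs))" using goodtuple_imp[OF g] by auto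
      have "vec.dim (lspan (us@bs)) = j" using dim_lspan[OF li] len us ij by simp
      moreover have "U \<subseteq> lspan (us@bs)"
        using us(2) lspan_sub[OF lspan_subspace, of us "us@bs"] set_lspan[of "us@bs"] by auto
      ultimately have "lspan (us@bs) \<in> VV" using gv lspan_subspace by (auto simp: VV_def)
      moreover have "bs \<in> P (lspan (us@bs))" using li len set_lspan[of "us@bs"] by (auto simp: P_def)
      ultimately show "bs \<in> (\<Union>V\<in>VV. P V)" by blast
    qed
    show "(\<Union>V\<in>VV. P V) \<subseteq> T"
    proof
      fix bs assume "bs \<in> (\<Union>V\<in>VV. P V)"
      then obtain V where V: "V \<in> VV" "bs \<in> P V" by blast
      have "goodtuple (us@bs)" using goodtuple_intro[of "us@bs"] sp[OF V] V by (auto simp: P_def VV_def)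
      then show "bs \<in> T" using V by (auto simp: T_def P_def)
    qed
  qed
  have fP: "finite (Pow (UNIV::(bit^'n) set))" by (rule iffD2[OF finite_Pow_iff finite_bitvec_UNIV])
  have finVV: "finite VV" by (rule finite_subset[OF _ fP]) auto
  have cT: "card T = (\<Sum>V\<in>VV. card (P V))"
    unfolding TU
  proof (rule card_UN_disjoint)
    show "finite VV" by (rule finVV)
    show "\<forall>V\<in>VV. finite (P V)"
      by (auto intro: finite_subset[OF _ finite_lists_k[of "j - i"]] simp: P_def)
    show "\<forall>V\<in>VV. \<forall>V'\<in>VV. V \<noteq> V' \<longrightarrow> P V \<inter> P V' = {}"
      using sp by blast
  qed
  also have "\<dots> = (\<Sum>V\<in>VV. (\<Prod>r<j-i. 2 ^ j - 2 ^ (i + r)))"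
  proof (intro sum.cong refl)
    fix V assume V: "V \<in> VV"
    show "card (P V) = (\<Prod>r<j-i. 2 ^ j - 2 ^ (i + r))"
      unfolding P_def using card_E[of V j us "j - i"] V cV[OF V] usV[OF V] us ij by (simp add: VV_def)
  qed
  also have "\<dots> = card VV * (\<Prod>r<j-i. 2 ^ j - 2 ^ (i + r))" by simp
  finally have 1: "card T = card VV * (\<Prod>r<j-i. 2 ^ j - 2 ^ (i + r))" .
  have "card T = (\<Prod>r<j-i. Bc (CARD('n) + 1) (i + r))"
    unfolding T_def using card_T[OF gu dv, of "j - i"] us ij by simp
  then show ?thesis using 1 unfolding VV_def by simp
qed

lemma choose_double: "h \<ge> 1 \<Longrightarrow> ((2*h) choose h) = 2 * ((2*h - 1) choose h)"
proof -
  assume "h \<ge> 1"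
  then obtain h' where h: "h = Suc h'" by (cases h) auto
  have "2*h = Suc (Suc (2*h'))" "2*h - 1 = Suc (2*h')" using h by simp_all
  then have "((2*h) choose h) = (Suc (2*h') choose h') + (Suc (2*h') choose Suc h')"
    using h by simp
  moreover have "(Suc (2*h') choose h') = (Suc (2*h') choose Suc h')"
  proof -
    have "(Suc (2*h') choose h') = (Suc (2*h') choose (Suc (2*h') - h'))"
      by (rule binomial_symmetric) simp
    also have "Suc (2*h') - h' = Suc h'" by simp
    finally show ?thesis .
  qed
  ultimately show ?thesis using h by simp
qed

lemma Bc_eq:
  assumes "m = 2 * h" "h \<ge> 1"
  shows "real ((m choose h) ^ (2 ^ s - 1) * ((m - 1) choose h)) =
         real (fact m) ^ (2 ^ s) / (real (fact h) ^ (2 ^ Suc s) * 2)"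
proof -
  have c: "real (m choose h) = fact m / (fact h * fact h)"
    using binomial_fact[of h m] assms by (simp add: mult_2)
  have c1: "real ((m - 1) choose h) = real (m choose h) / 2" using choose_double[OF assms(2)] assms by simp
  have p: "(2::nat) ^ s = (2 ^ s - 1) + 1" by simp
  have "real ((m choose h) ^ (2 ^ s - 1) * ((m - 1) choose h)) = real (m choose h) ^ (2 ^ s - 1) * real (m choose h) / 2"
    using c1 by simp
  also have "\<dots> = real (m choose h) ^ (2 ^ s) / 2"
    by (subst (2) p, subst power_add) simp
  also have "\<dots> = (fact m / (fact h * fact h)) ^ (2 ^ s) / 2" using c by simp
  also have "\<dots> = real (fact m) ^ (2 ^ s) / (real (fact h) ^ (2 ^ Suc s) * 2)"
  proof -
    have sq: "(x*x)^(2^s) = (x::real)^(2^Suc s)" for x by (simp only: power_Suc power_mult power2_eq_square)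
    show ?thesis by (simp add: power_divide sq)
  qed
  finally show ?thesis .
qed

lemma prod_Bc:
  assumes W: "W \<ge> 1" and dv: "2 ^ (i + n) dvd W"
  shows "real (\<Prod>r<n. Bc W (i + r)) = real (fact (W div 2 ^ i)) ^ (2 ^ i) / (real (fact (W div 2 ^ (i + n))) ^ (2 ^ (i + n)) * 2 ^ n)"
  using dv
proof (induction n)
  case 0
  have "fact (W div 2 ^ i) \<noteq> (0::real)" by simp
  then show ?case by simp
next
  case (Suc n)
  have "(2::nat) ^ (i + n) dvd 2 ^ (i + Suc n)" by (rule le_imp_power_dvd) simp
  then have dv1: "2 ^ (i + n) dvd W" using Suc.prems by (rule dvd_trans)
  define m where "m = W div 2 ^ (i + n)"
  define h where "h = W div 2 ^ (i + Suc n)"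
  obtain q where q: "W = 2 ^ (i + Suc n) * q" using Suc.prems by (elim dvdE)
  have hq: "h = q" unfolding h_def q by simp
  have mq: "m = 2 * q" unfolding m_def q by simp
  have q1: "q \<ge> 1" using W q by (cases q) auto
  have p2: "(2::nat) ^ (i + Suc n) = 2 ^ (i + n) * 2" by simp
  have hh: "W div 2 ^ (i + n) div 2 = h" unfolding h_def p2 by (simp only: div_mult2_eq)
  have B: "real (Bc W (i + n)) = real (fact m) ^ (2 ^ (i + n)) / (real (fact h) ^ (2 ^ Suc (i + n)) * 2)"
    unfolding Bc_def hh m_def[symmetric] using Bc_eq[of m h "i + n"] mq hq q1 by simp
  have "real (\<Prod>r<Suc n. Bc W (i + r)) = real (\<Prod>r<n. Bc W (i + r)) * real (Bc W (i + n))" by simp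
  also have "\<dots> = real (fact (W div 2 ^ i)) ^ (2 ^ i) / (real (fact m) ^ (2 ^ (i + n)) * 2 ^ n) *
     (real (fact m) ^ (2 ^ (i + n)) / (real (fact h) ^ (2 ^ Suc (i + n)) * 2))"
    using Suc.IH[OF dv1] B m_def by simp
  also have "\<dots> = real (fact (W div 2 ^ i)) ^ (2 ^ i) / (real (fact h) ^ (2 ^ Suc (i + n)) * 2 ^ Suc n)"
  proof -
    have "real (fact m) ^ (2 ^ (i + n)) \<noteq> 0" by simp
    then show ?thesis by (simp add: field_simps)
  qed
  finally show ?case unfolding h_def by simp
qed

lemma geom2: fixes s :: nat shows "(\<Sum>r<s. (2::real) ^ r) = 2 ^ s - 1"
  by (induction s) simp_all

lemma qfact2: "qfact 2 n = (\<Prod>s=1..n. (2::real) ^ s - 1)"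
  unfolding qfact_def using geom2 by simp

lemma prod_rev: fixes n :: nat shows "(\<Prod>r<n. f (n - r)) = (\<Prod>s=1..n. (f s :: real))"
proof (induction n)
  case 0 then show ?case by simp
next
  case (Suc n)
  have "(\<Prod>r<Suc n. f (Suc n - r)) = f (Suc n) * (\<Prod>r<n. f (Suc n - Suc r))"
    by (subst prod.lessThan_Suc_shift) simp
  also have "(\<Prod>r<n. f (Suc n - Suc r)) = (\<Prod>r<n. f (n - r))" by simp
  also have "\<dots> = (\<Prod>s=1..n. f s)" by (rule Suc.IH)
  finally show ?case by (simp add: prod.nat_ivl_Suc' mult.commute)
qed

lemma sum_ir: fixes n i :: nat shows "2 * (\<Sum>r<n. i + r) + n = n * (2 * i + n)"
  by (induction n) (auto simp: algebra_simps)

lemma prod_E: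
  "real (\<Prod>r<n. (2::nat) ^ (i + n) - 2 ^ (i + r)) = 2 ^ (\<Sum>r<n. i + r) * qfact 2 n"
proof -
  have "real (\<Prod>r<n. (2::nat) ^ (i + n) - 2 ^ (i + r)) = (\<Prod>r<n. (2::real) ^ (i + r) * (2 ^ (n - r) - 1))"
    unfolding of_nat_prod
  proof (intro prod.cong refl)
    fix r assume "r \<in> {..<n}"
    then have r: "r < n" by simp
    have le: "(2::nat) ^ (i + r) \<le> 2 ^ (i + n)" using r by (simp add: power_increasing)
    have "(2::real) ^ (i + n) = 2 ^ (i + r) * 2 ^ (n - r)" using r by (simp add: power_add[symmetric])
    then show "real ((2::nat) ^ (i + n) - 2 ^ (i + r)) = 2 ^ (i + r) * (2 ^ (n - r) - 1)"
      using le by (simp add: of_nat_diff algebra_simps)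
  qed
  also have "\<dots> = (\<Prod>r<n. (2::real) ^ (i + r)) * (\<Prod>r<n. 2 ^ (n - r) - 1)" by (rule prod.distrib)
  also have "(\<Prod>r<n. (2::real) ^ (i + r)) = 2 ^ (\<Sum>r<n. i + r)" by (simp add: power_sum)
  also have "(\<Prod>r<n. (2::real) ^ (n - r) - 1) = qfact 2 n"
    unfolding qfact2 using prod_rev[of "\<lambda>s. (2::real) ^ s - 1" n] by simp
  finally show ?thesis .
qed

lemma final_arith:
  assumes W: "W \<ge> 1" and dv: "2 ^ j dvd W" and ij: "i \<le> j"
  shows "real (\<Prod>r<j-i. Bc W (i + r)) / real (\<Prod>r<j-i. (2::nat) ^ j - 2 ^ (i + r)) = Gamma_dot W i j"
proof -
  define n where "n = j - i"
  have j: "j = i + n" using ij n_def by simp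
  define S where "S = (\<Sum>r<n. i + r)"
  have pw: "(2::real) powr (real ((j - i) * (j + i + 1)) / 2) = 2 ^ (n + S)"
  proof -
    have a: "2 * S + n = n * (2*i+n)" unfolding S_def by (rule sum_ir)
    have "(j - i) * (j + i + 1) = n * (2*i+n) + n" unfolding j by (simp add: algebra_simps)
    also have "\<dots> = 2 * (n + S)" using a by simp
    finally have eq: "(j - i) * (j + i + 1) = 2 * (n + S)" .
    have e1: "real ((j - i) * (j + i + 1)) = real (2 * (n + S))" using eq by (rule arg_cong)
    have e2: "real ((j - i) * (j + i + 1)) / 2 = real (n + S)" unfolding e1 by simp
    have "(2::real) powr (real ((j - i) * (j + i + 1)) / 2) = 2 powr (real (n + S))" by (simp only: e2)
    also have "\<dots> = 2 ^ (n + S)" by (rule powr_realpow) simp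
    finally show ?thesis .
  qed
  have qf: "qfact 2 n > 0" unfolding qfact2 by (intro prod_pos) simp
  have dvn: "2 ^ (i + n) dvd W" using dv j by simp
  have A: "real (\<Prod>r<n. Bc W (i + r)) = real (fact (W div 2 ^ i)) ^ (2 ^ i) / (real (fact (W div 2 ^ j)) ^ (2 ^ j) * 2 ^ n)"
    using prod_Bc[OF W dvn] unfolding j[symmetric] .
  have B: "real (\<Prod>r<n. (2::nat) ^ j - 2 ^ (i + r)) = 2 ^ S * qfact 2 n"
    using prod_E[where n=n and i=i] unfolding j[symmetric] S_def .
  have fj: "real (fact (W div 2 ^ j)) ^ (2 ^ j) > 0" by simp
  have jn: "j - i = n" using n_def by simp
  have G: "Gamma_dot W i j = real (fact (W div 2 ^ i)) ^ (2 ^ i) /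
     (2 ^ (n + S) * real (fact (W div 2 ^ j)) ^ (2 ^ j) * qfact 2 (j - i))"
    by (simp only: Gamma_dot_def pw)
  show ?thesis
    unfolding G jn A B using qf fj
    by (simp add: field_simps power_add)
qed

lemma dvd_W:
  assumes ne: "Ddot j \<noteq> ({} :: (bit^'n::finite) set set)"
  shows "2 ^ j dvd CARD('n) + 1"
proof -
  obtain V0 :: "(bit^'n) set" where V0: "V0 \<in> Ddot j" using ne by blast
  then have V0s: "vec.subspace V0" "vec.dim V0 = j" "goodV V0" using Ddot_good by blast+
  obtain l0 where l0: "lindep l0" "lspan l0 = V0" "length l0 = j" using list_basis[OF V0s(1)] V0s by metis
  have "goodtuple l0" using goodtuple_intro[OF l0(1)] l0 V0s by simp
  then have "2 ^ j * fib l0 (replicate j 0) = CARD('n) + 1" using l0 unfolding goodtuple_def by (simp add: Ls_def)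
  then show ?thesis by (metis dvd_triv_left)
qed

lemma count_final:
  fixes U :: "(bit^'n::finite) set"
  assumes U: "vec.subspace U" "vec.dim U = i" "goodV U" and ij: "i \<le> j"
    and ne: "Ddot j \<noteq> ({} :: (bit^'n) set set)"
  shows "real (card {V \<in> (Ddot j :: (bit^'n) set set). U \<subseteq> V}) = Gamma_dot (CARD('n) + 1) i j"
proof -
  have dv: "2 ^ j dvd CARD('n) + 1" by (rule dvd_W[OF ne])
  have eqs: "{V \<in> (Ddot j :: (bit^'n) set set). U \<subseteq> V} = {V. vec.subspace V \<and> vec.dim V = j \<and> goodV V \<and> U \<subseteq> V}"
    using Ddot_iff[OF ne] by blast
  have m: "card {V. vec.subspace V \<and> vec.dim V = j \<and> goodV V \<and> U \<subseteq> V} * (\<Prod>r<j-i. (2::nat) ^ j - 2 ^ (i + r))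
       = (\<Prod>r<j-i. Bc (CARD('n) + 1) (i + r))" by (rule count_main[OF U ij dv])
  have pos: "(\<Prod>r<j-i. (2::nat) ^ j - 2 ^ (i + r)) > 0"
  proof (rule prod_pos)
    fix r assume "r \<in> {..<j-i}"
    then have "i + r < j" by simp
    then have "(2::nat) ^ (i + r) < 2 ^ j" by (rule power_strict_increasing) simp
    then show "(2::nat) ^ j - 2 ^ (i + r) > 0" by simp
  qed
  have "real (card {V. vec.subspace V \<and> vec.dim V = j \<and> goodV V \<and> U \<subseteq> V}) =
     real (\<Prod>r<j-i. Bc (CARD('n) + 1) (i + r)) / real (\<Prod>r<j-i. (2::nat) ^ j - 2 ^ (i + r))"
  proof -
    have gen: "real a = real c / real b" if "a * b = c" "b > 0" for a b c :: nat
    proof -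
      have "real c = real a * real b" using that(1) by (metis of_nat_mult)
      then show ?thesis using that(2) by simp
    qed
    show ?thesis by (rule gen[OF m pos])
  qed
  also have "\<dots> = Gamma_dot (CARD('n) + 1) i j" by (rule final_arith[OF _ dv ij]) simp
  finally show ?thesis using eqs by simp
qed

lemma zero_space:
  shows "vec.subspace {0::bit^'n::finite}" "vec.dim {0::bit^'n} = 0" "goodV {0::bit^'n}"
proof -
  show s: "vec.subspace {0::bit^'n}" by (simp add: vec.subspace_def)
  have "card {0::bit^'n} = 2 ^ vec.dim {0::bit^'n}" by (rule card_subspace[OF s])
  then have "(2::nat) ^ vec.dim {0::bit^'n} = 2 ^ 0" by simp
  then show "vec.dim {0::bit^'n} = 0" by (simp only: power_inject_exp)
  show "goodV {0::bit^'n}" by (simp add: goodV_def)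
qed

theorem lemma7:
  fixes w i j :: nat
  assumes "w = CARD('n::finite) + 1"
    and "(w - 1) mod 6 = 1 \<or> (w - 1) mod 6 = 3"
    and "i \<le> j"
    and "(Ddot j :: (bit ^ 'n) set set) \<noteq> {}"
  shows "(\<forall>U \<in> (Ddot i :: (bit ^ 'n) set set).
            real (card {V \<in> (Ddot j :: (bit ^ 'n) set set). U \<subseteq> V}) = Gamma_dot w i j)
       \<and> real (card (Ddot j :: (bit ^ 'n) set set)) = Gamma_dot w 0 j"
proof
  show "\<forall>U \<in> (Ddot i :: (bit ^ 'n) set set).
            real (card {V \<in> (Ddot j :: (bit ^ 'n) set set). U \<subseteq> V}) = Gamma_dot w i j"
  proof
    fix U assume "U \<in> (Ddot i :: (bit ^ 'n) set set)"
    then have U: "vec.subspace U" "vec.dim U = i" "goodV U" using Ddot_good by blast+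
    show "real (card {V \<in> (Ddot j :: (bit ^ 'n) set set). U \<subseteq> V}) = Gamma_dot w i j"
      using count_final[OF U assms(3) assms(4)] assms(1) by simp
  qed
  have "{V \<in> (Ddot j :: (bit ^ 'n) set set). {0} \<subseteq> V} = Ddot j"
    using Ddot_good vec.subspace_0 by blast
  then show "real (card (Ddot j :: (bit ^ 'n) set set)) = Gamma_dot w 0 j"
    using count_final[OF zero_space _ assms(4)] assms(1) by simp
qed

end
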